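(* Let $\mathbf a=(a_i)_{i\ge0}$ be the fixed point beginning with $0$ of the $5$-uniform morphism $\sigma$ on $\{0,1,2,3,4\}$ defined by $\sigma(0)=00043$, $\sigma(1)=13042$, $\sigma(2)=14201$, $\sigma(3)=32411$, $\sigma(4)=00144$, with letters viewed as elements of $\mathbb{F}_5$, and let $f_{\mathbf a}(T)=\sum_{i\ge0}a_iT^{-i}\in\mathbb{F}_5[[T^{-1}]]$. Then $\mu(f_{\mathbf a})=3.4$.
   Context: The fixed point is $\sigma^\infty(0)=\lim_n\sigma^n(0)=0004300043\cdots$. Fix a real $|T|>1$; $|g|=|T|^{-i_0}$ for $g\in\mathbb{F}_5((T^{-1}))$ with leading term $T^{-i_0}$. The irrationality exponent $\mu(f)$ is the supremum of real $\tau$ such that $|f-P/Q|<|Q|^{-\tau}$ has infinitely many solutions $(P,Q)\in\mathbb{F}_5[T]^2$, $Q\ne0$. *)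

theory Defs
  imports "HOL-Computational_Algebra.Formal_Laurent_Series" "HOL-Library.Extended_Real" "HOL-Library.Cardinality"
begin

text \<open>Laurent series in T^{-1} are represented as 'a fls in the variable X = T^{-1}.
  So the coefficient of T^{-i} is the X^i coefficient.\<close>

fun sigma :: "nat \<Rightarrow> nat list" where
  "sigma 0 = [0,0,0,4,3]"
| "sigma (Suc 0) = [1,3,0,4,2]"
| "sigma (Suc (Suc 0)) = [1,4,2,0,1]"
| "sigma (Suc (Suc (Suc 0))) = [3,2,4,1,1]"
| "sigma (Suc (Suc (Suc (Suc 0)))) = [0,0,1,4,4]"
| "sigma _ = []"

definition is_sigma_fixed_point :: "(nat \<Rightarrow> nat) \<Rightarrow> bool" where
  "is_sigma_fixed_point a \<longleftrightarrow> (\<forall>i. \<forall>j<5. a (5 * i + j) = sigma (a i) ! j)"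

definition poly_T :: "'a::comm_ring_1 poly \<Rightarrow> 'a fls" where
  "poly_T P = (\<Sum>j\<le>degree P. fls_const (coeff P j) * fls_X_inv ^ j)"

definition f_word :: "(nat \<Rightarrow> nat) \<Rightarrow> 'a::comm_ring_1 fls" where
  "f_word a = fps_to_fls (Abs_fps (\<lambda>i. of_nat (a i)))"

definition absT :: "real \<Rightarrow> 'a::zero fls \<Rightarrow> real" where
  "absT T g = (if g = 0 then 0 else \<bar>T\<bar> powr (- real_of_int (fls_subdegree g)))"

definition irr_exp :: "real \<Rightarrow> 'a::field fls \<Rightarrow> ereal" where
  "irr_exp T f = Sup {ereal \<tau> | \<tau>.
     infinite {(P :: 'a poly, Q :: 'a poly). Q \<noteq> 0 \<and>
        absT T (f - poly_T P / poly_T Q) < absT T (poly_T Q) powr (- \<tau>)}}"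

end

theory Submission imports Defs "HOL-Computational_Algebra.Polynomial_Factorial"
begin


locale fpword =
  fixes a :: "nat \<Rightarrow> nat"
  assumes fp: "is_sigma_fixed_point a" and a0: "a 0 = 0"
begin

lemma A: "j < 5 \<Longrightarrow> a (5*i+j) = sigma (a i) ! j"
  using fp unfolding is_sigma_fixed_point_def by blast

lemma vals: "a 1 = 0" "a 2 = 0" "a 3 = 4" "a 4 = 3" "a 5 = 0" "a 6 = 0" "a 7 = 0" "a 8 = 4" "a 9 = 3"
  "a 10 = 0" "a 11 = 0" "a 12 = 0" "a 13 = 4" "a 14 = 3" "a 15 = 0" "a 16 = 0" "a 17 = 1"
proof -
  have v1: "a 1 = 0" "a 2 = 0" "a 3 = 4" "a 4 = 3"
    using A[of 1 0] A[of 2 0] A[of 3 0] A[of 4 0] a0 by (simp_all add: numeral_eq_Suc)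
  have v2: "a 5 = 0" "a 6 = 0" "a 7 = 0" "a 8 = 4" "a 9 = 3"
    using A[of 0 1] A[of 1 1] A[of 2 1] A[of 3 1] A[of 4 1] v1 by (simp_all add: numeral_eq_Suc)
  have v3: "a 10 = 0" "a 11 = 0" "a 12 = 0" "a 13 = 4" "a 14 = 3"
    using A[of 0 2] A[of 1 2] A[of 2 2] A[of 3 2] A[of 4 2] v1 by (simp_all add: numeral_eq_Suc)
  have v4: "a 15 = 0" "a 16 = 0" "a 17 = 1"
    using A[of 0 3] A[of 1 3] A[of 2 3] v1 by (simp_all add: numeral_eq_Suc)
  show "a 1 = 0" "a 2 = 0" "a 3 = 4" "a 4 = 3" "a 5 = 0" "a 6 = 0" "a 7 = 0" "a 8 = 4" "a 9 = 3"
  "a 10 = 0" "a 11 = 0" "a 12 = 0" "a 13 = 4" "a 14 = 3" "a 15 = 0" "a 16 = 0" "a 17 = 1"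
    using v1 v2 v3 v4 by auto
qed

lemma per: "m < 12*5^j \<Longrightarrow> a (m + 5^(Suc j)) = a m"
proof (induction j arbitrary: m)
  case 0
  hence "m < 12" by simp
  then show ?case using vals a0
  proof -
    have "m = 0 \<or> m = 1 \<or> m = 2 \<or> m = 3 \<or> m = 4 \<or> m = 5 \<or> m = 6 \<or> m = 7 \<or> m = 8 \<or> m = 9 \<or> m = 10 \<or> m = 11"
      using \<open>m<12\<close> by presburger
    then show ?thesis using vals a0 by (elim disjE) simp_all
  qed
next
  case (Suc j)
  define q r where "q = m div 5" and "r = m mod 5"
  have m: "m = 5*q + r" and r: "r < 5" by (simp_all add: q_def r_def)
  have q: "q < 12*5^j" using Suc.prems m by simp
  have e: "m + 5^Suc (Suc j) = 5*(q + 5^Suc j) + r" using m by simp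
  have "a (m + 5^Suc (Suc j)) = a (5*(q + 5^Suc j) + r)" by (rule arg_cong[where f=a, OF e])
  also have "\<dots> = sigma (a (q + 5^Suc j)) ! r" by (rule A[OF r])
  also have "\<dots> = sigma (a q) ! r" using Suc.IH q by simp
  also have "\<dots> = a m" using A[OF r, of q] m by simp
  finally show ?case .
qed

lemma a5: "a x \<in> {0,1} \<Longrightarrow> a (5*x) = a x"
  using A[of 0 x] by auto

lemma apow: "a (5^j * x) = a x" if "a x \<in> {0,1}"
proof (induction j)
  case (Suc j)
  have "a (5^Suc j * x) = a (5 * (5^j * x))" by (simp add: mult.assoc)
  also have "\<dots> = a (5^j*x)" using a5 Suc that by simp
  finally show ?case using Suc by simp
qed simp

definition Sop :: "(nat \<Rightarrow> nat) \<Rightarrow> nat \<Rightarrow> nat" where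
  "Sop h c = (\<Sum>t<5. h (sigma c ! t))"

lemma sum_split5: "(\<Sum>y<5*(M::nat). F y) = (\<Sum>y<M. \<Sum>t<5. F (5*y+t))"
proof -
  have "(\<Sum>y<5*M. F y) = (\<Sum>m<M. sum F {m*5..<m*5+5})" using sum.nat_group[of F 5 M] by (simp add: mult.commute)
  also have "\<dots> = (\<Sum>y<M. \<Sum>t<5. F (5*y+t))"
  proof (rule sum.cong[OF refl])
    fix m show "sum F {m*5..<m*5+5} = (\<Sum>t<5. F (5*m+t))"
      using sum.shift_bounds_nat_ivl[of F 0 "m*5" 5] by (simp add: atLeast0LessThan add.commute mult.commute)
  qed
  finally show ?thesis .
qed

lemma block: "(\<Sum>y<5^k. h (a (5^k*x + y))) = (Sop^^k) h (a x)"
proof (induction k arbitrary: h)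
  case 0 then show ?case by simp
next
  case (Suc k)
  have "(\<Sum>y<5^Suc k. h (a (5^Suc k*x + y))) = (\<Sum>y<5^k. \<Sum>t<5. h (a (5^Suc k*x + (5*y+t))))"
    using sum_split5[where M="5^k"] by simp
  also have "\<dots> = (\<Sum>y<5^k. Sop h (a (5^k*x + y)))"
  proof (intro sum.cong refl)
    fix y
    have "h (a (5^Suc k*x + (5*y+t))) = h (sigma (a (5^k*x+y)) ! t)" if "t \<in> {..<5}" for t
    proof -
      have e: "5^Suc k*x + (5*y+t) = 5*(5^k*x+y) + t" by (simp add: algebra_simps)
      have "a (5^Suc k*x + (5*y+t)) = a (5*(5^k*x+y) + t)" by (rule arg_cong[where f=a, OF e])
      also have "\<dots> = sigma (a (5^k*x+y)) ! t" using that by (intro A) simp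
      finally show ?thesis by simp
    qed
    then show "(\<Sum>t<5. h (a (5^Suc k*x + (5*y+t)))) = Sop h (a (5^k*x + y))"
      unfolding Sop_def by (rule sum.cong[OF refl])
  qed
  also have "\<dots> = (Sop^^k) (Sop h) (a x)" by (rule Suc.IH)
  finally show ?case by (simp add: funpow_Suc_right del: funpow.simps)
qed

lemma sum5: "(\<Sum>t<(5::nat). g t) = g 0 + g 1 + g 2 + g 3 + (g 4 :: nat)"
  by (simp add: numeral_eq_Suc add.assoc)

lemma sigv: "sigma 0 = [0,0,0,4,3]" "sigma 1 = [1,3,0,4,2]" "sigma 2 = [1,4,2,0,1]"
  "sigma 3 = [3,2,4,1,1]" "sigma 4 = [0,0,1,4,4]"
  by (simp_all add: numeral_eq_Suc)

definition tab :: "nat \<Rightarrow> nat \<Rightarrow> nat" where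
  "tab r c = [[2,0,3,1,4],[1,0,4,3,2],[3,0,2,4,1],[4,0,1,2,3::nat]] ! r ! c"

lemma tabl: "c < 5 \<Longrightarrow> (Sop^^Suc k) id c mod 5 = tab (k mod 4) c"
proof (induction k arbitrary: c)
  case 0
  then have "c \<in> {0,1,2,3,4}" by auto
  then show ?case by (auto simp add: Sop_def tab_def sum5 sigv)
next
  case (Suc k)
  have c5: "c \<in> {0,1,2,3,4}" using Suc.prems by auto
  have sl: "sigma c ! t < 5" if "t < 5" for t
  proof -
    have "t \<in> {0,1,2,3,4}" using that by auto
    then show ?thesis using c5 by (auto simp: sigv)
  qed
  have "(Sop^^Suc (Suc k)) id c mod 5 = (\<Sum>t<5. (Sop^^Suc k) id (sigma c ! t) mod 5) mod 5"
    unfolding funpow.simps(2) o_apply Sop_def by (rule mod_sum_eq[symmetric])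
  also have "\<dots> = (\<Sum>t<5. tab (k mod 4) (sigma c ! t)) mod 5"
    using Suc.IH sl by (simp add: id_def)
  also have "\<dots> = tab (Suc k mod 4) c"
  proof -
    have "k mod 4 = 0 \<or> k mod 4 = 1 \<or> k mod 4 = 2 \<or> k mod 4 = 3" by presburger
    moreover have "Suc k mod 4 = (if k mod 4 = 3 then 0 else Suc (k mod 4))" by (simp add: mod_Suc)
    ultimately show ?thesis using c5
      by (auto simp add: sum5 sigv tab_def)
  qed
  finally show ?case .
qed

lemma sumnz: "(\<Sum>i<5^Suc j. a i) mod 5 \<noteq> 0"
proof -
  have "(\<Sum>i<5^Suc j. a i) = (Sop^^Suc j) id (a 0)" using block[where k="Suc j" and h=id and x=0] by simp
  hence "(\<Sum>i<5^Suc j. a i) mod 5 = tab (j mod 4) 0" using tabl[where c=0 and k=j] a0 by simp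
  moreover have "j mod 4 \<in> {0,1,2,3}" by auto
  ultimately show ?thesis by (auto simp add: tab_def)
qed

end


lemma pT_nth: "fls_nth (poly_T (P::'a::field poly)) i = (if i \<le> 0 then coeff P (nat (-i)) else 0)"
proof (cases "i \<le> 0")
  case False
  then show ?thesis unfolding poly_T_def by (simp add: fls_nth_sum)
next
  case True
  define m where "m = nat (-i)"
  have i: "i = - int m" using True m_def by simp
  have "fls_nth (poly_T P) i = (\<Sum>j\<le>degree P. (if j = m then coeff P j else 0))"
    unfolding poly_T_def fls_nth_sum by (intro sum.cong) (auto simp: i)
  also have "\<dots> = coeff P m"
    by (auto simp: coeff_eq_0)
  finally show ?thesis using True m_def by simp
qed

lemma pT_inj: "poly_T (P::'a::field poly) = poly_T Q \<Longrightarrow> P = Q"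
proof (rule poly_eqI)
  fix n assume "poly_T P = poly_T Q"
  then have "fls_nth (poly_T P) (- int n) = fls_nth (poly_T Q) (- int n)" by simp
  then show "coeff P n = coeff Q n" by (simp add: pT_nth)
qed

lemma pT_0 [simp]: "poly_T (0::'a::field poly) = 0"
  by (rule fls_eqI) (simp add: pT_nth)

lemma pT_eq0: "poly_T (P::'a::field poly) = 0 \<longleftrightarrow> P = 0"
  using pT_inj[of P 0] by auto

lemma pT_add: "poly_T ((P::'a::field poly) + Q) = poly_T P + poly_T Q"
  by (rule fls_eqI) (simp add: pT_nth)

lemma pT_diff: "poly_T ((P::'a::field poly) - Q) = poly_T P - poly_T Q"
  by (rule fls_eqI) (simp add: pT_nth)

lemma pT_smult: "poly_T (smult c (P::'a::field poly)) = fls_const c * poly_T P"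
  by (rule fls_eqI) (simp add: pT_nth)

lemma pT_pCons: "poly_T (pCons c (P::'a::field poly)) = fls_const c + fls_X_inv * poly_T P"
proof (rule fls_eqI)
  fix n
  have X: "fls_X_inv * poly_T P = fls_shift 1 (poly_T P)"
    using fls_X_inv_power_times_conv_shift(1)[of 1 "poly_T P"] by simp
  show "fls_nth (poly_T (pCons c P)) n = fls_nth (fls_const c + fls_X_inv * poly_T P) n"
    unfolding X
    by (cases "n \<le> 0"; cases "n = 0") (auto simp: pT_nth coeff_pCons split: nat.split, simp add: nat_diff_distrib')
qed

lemma pT_mult: "poly_T ((P::'a::field poly) * Q) = poly_T P * poly_T Q"
proof (induction P)
  case 0 then show ?case by simp
next
  case (pCons c p)
  have "poly_T (pCons c p * Q) = poly_T (smult c Q + pCons 0 (p * Q))" by simp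
  also have "\<dots> = fls_const c * poly_T Q + fls_X_inv * (poly_T p * poly_T Q)"
    by (simp add: pT_add pT_smult pT_pCons pCons.IH)
  also have "\<dots> = poly_T (pCons c p) * poly_T Q"
    by (simp add: pT_pCons algebra_simps)
  finally show ?case .
qed

lemma pT_subdeg: "(P::'a::field poly) \<noteq> 0 \<Longrightarrow> fls_subdegree (poly_T P) = - int (degree P)"
  by (rule fls_subdegree_eqI) (auto simp: pT_nth coeff_eq_0)

lemma pT_monom: "poly_T (monom (1::'a::field) d - 1) = fls_X_inv ^ d - 1"
  by (rule fls_eqI) (auto simp: pT_nth fls_X_inv_power_nth)

lemma of_nat_card_0: "CARD('a::field) = 5 \<Longrightarrow> of_nat 5 = (0::'a)"
proof -
  assume c: "CARD('a) = 5"
  hence fin: "finite (UNIV::'a set)" using card_ge_0_finite by force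
  have "(\<Sum>x\<in>(UNIV::'a set). x + 1) = (\<Sum>x\<in>UNIV. x)"
    by (rule sum.reindex_bij_witness[where i="\<lambda>x. x - 1" and j="\<lambda>x. x + 1"]) auto
  moreover have "(\<Sum>x\<in>(UNIV::'a set). x + 1) = (\<Sum>x\<in>UNIV. x) + of_nat (CARD('a))"
    by (simp add: sum.distrib)
  ultimately show ?thesis using c by simp
qed

lemma char5: "CARD('a::field) = 5 \<Longrightarrow> CHAR('a) = 5"
proof -
  assume c: "CARD('a) = 5"
  have "CHAR('a) dvd 5" using of_nat_card_0[OF c] of_nat_eq_0_iff_char_dvd by blast
  moreover have "CHAR('a) \<noteq> 1" using CHAR_not_1 by simp
  moreover have "prime (5::nat)" by simp
  ultimately show ?thesis by (metis prime_nat_iff)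
qed

lemma frob: fixes x :: "'a::field poly"
  assumes "CARD('a) = 5" shows "(x - 1) ^ (5^n) = x^(5^n) - 1"
proof -
  have ch: "CHAR('a poly) = 5" using char5[OF assms] by simp
  have pr: "prime CHAR('a poly)" using ch by simp
  have "(x + (-1)) ^ (5^n) = x^(5^n) + (-1)^(5^n)"
    by (rule freshmans_dream'[OF pr, where n=n]) (simp add: char5[OF assms])
  moreover have "odd ((5::nat)^n)" by simp
  ultimately show ?thesis by simp
qed

lemma qpow: fixes dummy :: "'a::field itself"
  assumes "CARD('a) = 5" shows "monom (1::'a) (5^n) - 1 = [:-1,1:]^(5^n)"
proof -
  have "[:-1,1::'a:] = [:0,1:] - 1" by (simp add: one_pCons)
  hence "[:-1,1::'a:]^(5^n) = [:0,1:]^(5^n) - 1" using frob[OF assms] by simp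
  then show ?thesis by (simp add: monom_altdef)
qed

lemma coprime_deg: fixes P p Q :: "'a::field poly"
  assumes "CARD('a) = 5" "poly p 1 \<noteq> 0" "P * (monom 1 (5^n) - 1) = p * Q" "Q \<noteq> 0"
  shows "5^n \<le> degree Q"
proof -
  let ?l = "[:-1,1::'a:]"
  have pe: "prime_elem ?l" by (rule prime_elem_linear_field_poly) simp
  have nd: "\<not> ?l dvd p" using assms(2) poly_eq_0_iff_dvd[of p 1] by simp
  have eq: "P * ?l^(5^n) = p * Q" using assms(3) by (simp only: qpow[OF assms(1)])
  have dv: "?l^(5^n) dvd p * Q" unfolding eq[symmetric] by (rule dvd_triv_right)
  have "?l^(5^n) dvd Q" using prime_power_dvd_multD[OF pe dv _ nd] by simp
  hence "degree (?l^(5^n)) \<le> degree Q" using dvd_imp_degree_le assms(4) by blast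
  then show ?thesis by (simp add: degree_linear_power)
qed



definition qj :: "nat \<Rightarrow> 'a::field poly" where "qj d = monom 1 d - 1"

lemma deg_qj: "0 < d \<Longrightarrow> degree (qj d :: 'a::field poly) = d"
  unfolding qj_def diff_conv_add_uminus by (subst degree_add_eq_left) (simp_all add: degree_monom_eq)

lemma absT_lt:
  fixes g :: "'a::field fls" and Q :: "'a poly"
  assumes T: "\<bar>T\<bar> > 1" and Q: "Q \<noteq> 0"
  shows "absT T g < absT T (poly_T Q) powr (-\<tau>) \<longleftrightarrow> (g = 0 \<or> real_of_int (fls_subdegree g) > \<tau> * real (degree Q))"
proof -
  have pq: "poly_T Q \<noteq> 0" using Q pT_eq0 by auto
  have "absT T (poly_T Q) powr (-\<tau>) = \<bar>T\<bar> powr (- \<tau> * real (degree Q))"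
    using pq T by (simp add: absT_def pT_subdeg[OF Q] powr_powr mult.commute)
  moreover have "\<bar>T\<bar> powr x < \<bar>T\<bar> powr y \<longleftrightarrow> x < y" for x y using T by simp
  ultimately show ?thesis using T by (auto simp: absT_def)
qed

lemma finite_polys:
  assumes "finite (UNIV :: 'a set)"
  shows "finite {P :: 'a::zero poly. degree P \<le> N}"
proof -
  let ?h = "\<lambda>P::'a poly. map (coeff P) [0..<Suc N]"
  have "inj_on ?h {P. degree P \<le> N}"
  proof (rule inj_onI)
    fix P Q :: "'a poly" assume P: "P \<in> {P. degree P \<le> N}" and Q: "Q \<in> {P. degree P \<le> N}" and e: "?h P = ?h Q"
    show "P = Q"
    proof (rule poly_eqI)
      fix k show "coeff P k = coeff Q k"
      proof (cases "k \<le> N")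
        case True
        have hk: "?h R ! k = coeff R k" for R using True by (simp add: nth_map_upt less_Suc_eq_le del: upt_Suc)
        have "coeff P k = ?h P ! k" using hk by simp
        also have "\<dots> = ?h Q ! k" using e by (simp only:)
        also have "\<dots> = coeff Q k" using hk by simp
        finally show ?thesis .
      next
        case False then show ?thesis using P Q by (simp add: coeff_eq_0)
      qed
    qed
  qed
  moreover have "?h ` {P. degree P \<le> N} \<subseteq> {xs. set xs \<subseteq> UNIV \<and> length xs = Suc N}" by auto
  moreover have "finite {xs. set xs \<subseteq> (UNIV::'a set) \<and> length xs = Suc N}"
    using finite_lists_length_eq[OF assms] by blast
  ultimately show ?thesis using inj_on_finite by blast
qed

context fpword
begin

definition pj :: "nat \<Rightarrow> 'a::field poly" where "pj d = (\<Sum>k<d. monom (of_nat (a (d-k))) k)"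

lemma pj_coeff: "coeff (pj d) k = (if k < d then of_nat (a (d-k)) else 0)"
  unfolding pj_def coeff_sum by (simp add: coeff_monom)

lemma fnth: "fls_nth (f_word a :: 'a::comm_ring_1 fls) i = (if i < 0 then 0 else of_nat (a (nat i)))"
  by (simp add: f_word_def)

lemma gnth:
  "fls_nth (poly_T (qj d) * (f_word a :: 'a::field fls) - poly_T (pj d)) i =
     (if 0 < i then of_nat (a (nat i + d)) - of_nat (a (nat i)) else 0)"
proof -
  have e: "poly_T (qj d) * (f_word a :: 'a fls) = fls_shift (int d) (f_word a) - f_word a"
    by (simp add: qj_def pT_monom algebra_simps fls_X_inv_power_times_conv_shift)
  show ?thesis
  proof (cases "0 < i")
    case True
    then show ?thesis unfolding e by (simp add: fnth pT_nth nat_add_distrib)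
  next
    case False
    show ?thesis
    proof (cases "nat (-i) < d")
      case True
      have n: "nat (i + int d) = d - nat (-i)" using False True by linarith
      show ?thesis unfolding e using False True a0
        by (simp add: fnth pT_nth pj_coeff n)
    next
      case F2: False
      show ?thesis unfolding e using False F2 a0
        by (auto simp add: fnth pT_nth pj_coeff)
    qed
  qed
qed

lemma g_subdeg:
  fixes dummy :: "'a::field itself" and j :: nat
  defines "g \<equiv> poly_T (qj (5^Suc j)) * (f_word a :: 'a fls) - poly_T (pj (5^Suc j))"
  shows "g \<noteq> 0" "fls_subdegree g = int (12 * 5^j)"
proof -
  have z: "fls_nth g i = 0" if "i < int (12*5^j)" for i
  proof (cases "0 < i")
    case True
    have "a (nat i + 5^Suc j) = a (nat i)" using per[of "nat i" j] that True by linarith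
    then show ?thesis unfolding g_def gnth by simp
  next
    case False then show ?thesis unfolding g_def gnth by simp
  qed
  have "a (12 * 5^j + 5^Suc j) = a (5^j * 17)" by (simp add: algebra_simps)
  also have "\<dots> = 1" using apow[of 17 j] vals by simp
  finally have a17: "a (12 * 5^j + 5^Suc j) = 1" .
  have a12: "a (12 * 5^j) = 0" using apow[of 12 j] vals by (simp add: mult.commute)
  have gm: "fls_nth g (int m) = (if 0 < m then of_nat (a (m + 5^Suc j)) - of_nat (a m) else 0)" for m
    unfolding g_def gnth by simp
  have o: "fls_nth g (int (12*5^j)) = 1" using gm[of "12*5^j"] a17 a12 by simp
  show "g \<noteq> 0" using o by auto
  show "fls_subdegree g = int (12 * 5^j)" by (rule fls_subdegree_eqI) (use o z in auto)
qed

lemma qj_ne: "qj (5^Suc j) \<noteq> (0::'a::field poly)"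
proof
  assume "qj (5^Suc j) = (0::'a poly)"
  hence "poly (qj (5^Suc j)) (0::'a) = 0" by simp
  thus False by (simp add: qj_def poly_monom power_0_left)
qed

lemma err:
  fixes dummy :: "'a::field itself" and j :: nat
  defines "R \<equiv> poly_T (pj (5^Suc j)) / poly_T (qj (5^Suc j)) :: 'a fls"
  shows "f_word a - R \<noteq> 0" "fls_subdegree (f_word a - R) = int (17 * 5^j)"
proof -
  let ?q = "poly_T (qj (5^Suc j)) :: 'a fls"
  let ?g = "?q * f_word a - poly_T (pj (5^Suc j))"
  have qn: "?q \<noteq> 0" using qj_ne pT_eq0 by blast
  have e: "(f_word a - R) * ?q = ?g" unfolding R_def using qn by (simp add: field_simps)
  have gn: "?g \<noteq> 0" and gs: "fls_subdegree ?g = int (12 * 5^j)" using g_subdeg[where 'a='a] by auto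
  show ne: "f_word a - R \<noteq> 0" using e gn by auto
  have dq: "degree (qj (5^Suc j) :: 'a poly) = 5^Suc j"
    by (simp add: deg_qj)
  have vq: "fls_subdegree ?q = - int (5^Suc j)"
    using pT_subdeg[OF qj_ne[where 'a='a and j=j]] dq by simp
  have "fls_subdegree ((f_word a - R) * ?q) = fls_subdegree (f_word a - R) - int (5^Suc j)"
    using ne qn vq by simp
  then show "fls_subdegree (f_word a - R) = int (17 * 5^j)" using e gs by simp
qed

lemma pj1: assumes "CARD('a::field) = 5" shows "poly (pj (5^Suc j)) (1::'a) \<noteq> 0"
proof -
  let ?d = "5^Suc j :: nat"
  have "poly (pj ?d) (1::'a) = of_nat (\<Sum>k<?d. a (?d - k))"
    unfolding pj_def by (simp add: poly_sum poly_monom)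
  also have "(\<Sum>k<?d. a (?d - k)) = (\<Sum>i<?d. a (Suc i))"
    using sum.nat_diff_reindex[of "\<lambda>i. a (Suc i)" ?d] by (simp add: Suc_diff_Suc)
  also have "\<dots> = (\<Sum>i<Suc ?d. a i)" by (subst sum.lessThan_Suc_shift) (simp add: a0)
  also have "\<dots> = (\<Sum>i<?d. a i)"
  proof -
    have "a ?d = 0" using apow[of 1 "Suc j"] vals by simp
    then show ?thesis by simp
  qed
  finally have e: "poly (pj ?d) (1::'a) = of_nat (\<Sum>i<?d. a i)" .
  have "\<not> CHAR('a) dvd (\<Sum>i<?d. a i)" using char5[OF assms] sumnz[of j] by (simp add: dvd_eq_mod_eq_0)
  then show ?thesis unfolding e using of_nat_eq_0_iff_char_dvd by blast
qed

end

lemma exj: "\<exists>j. n < 12*5^j \<and> 12*5^Suc j \<le> 25*n + (60::nat)"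
proof -
  have ex: "\<exists>j. n < 12*5^j"
  proof
    have "n < 2^n" by (rule less_exp)
    also have "(2::nat)^n \<le> 5^n" by (rule power_mono) simp_all
    finally have "n < 5^n" .
    then show "n < 12*5^n" by simp
  qed
  define j where "j = (LEAST j. n < 12*5^j)"
  have j: "n < 12*5^j" unfolding j_def by (rule LeastI_ex[OF ex])
  have "12*5^Suc j \<le> 25*n + 60"
  proof (cases j)
    case 0 then show ?thesis by simp
  next
    case (Suc j')
    have "\<not> n < 12*5^j'" using not_less_Least[of j' "\<lambda>j. n < 12*5^j"] Suc unfolding j_def by simp
    then show ?thesis using Suc by simp
  qed
  then show ?thesis using j by blast
qed

theorem proposition5p9:
  fixes a :: "nat \<Rightarrow> nat" and T :: real
  assumes "CARD('a) = 5"
    and "\<bar>T\<bar> > 1"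
    and "is_sigma_fixed_point a"
    and "a 0 = 0"
  shows "irr_exp T (f_word a :: 'a::field fls) = ereal (17 / 5)"
proof -
  interpret fpword a using assms(3,4) by unfold_locales
  note card = assms(1) and T = assms(2)
  define f where "f = (f_word a :: 'a fls)"
  define Sol where "Sol \<tau> = {(P::'a poly, Q). Q \<noteq> 0 \<and>
        absT T (f - poly_T P / poly_T Q) < absT T (poly_T Q) powr (- \<tau>)}" for \<tau>
  have ie: "irr_exp T f = Sup {ereal \<tau> | \<tau>. infinite (Sol \<tau>)}"
    unfolding irr_exp_def Sol_def by simp
  have finU: "finite (UNIV :: 'a set)" using card card_ge_0_finite by force
  have vf: "fls_subdegree f \<ge> 0" unfolding f_def f_word_def by (rule fls_subdegree_fls_to_fps_gt0)

  have low: "infinite (Sol \<tau>)" if tl: "\<tau> < 17/5" for \<tau>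
  proof
    assume fin: "finite (Sol \<tau>)"
    let ?h = "\<lambda>j. (pj (5^Suc j) :: 'a poly, qj (5^Suc j) :: 'a poly)"
    have sub: "range ?h \<subseteq> Sol \<tau>"
    proof clarify
      fix j
      let ?R = "poly_T (pj (5^Suc j)) / poly_T (qj (5^Suc j)) :: 'a fls"
      have dq: "degree (qj (5^Suc j) :: 'a poly) = 5^Suc j"
        by (simp add: deg_qj)
      have "\<tau> * real (5^Suc j) < 17/5 * real (5^Suc j)"
        using tl by (intro mult_strict_right_mono) auto
      also have "\<dots> = real (17 * 5^j)" by simp
      finally have "real_of_int (fls_subdegree (f - ?R)) > \<tau> * real (degree (qj (5^Suc j) :: 'a poly))"
        using err(2)[where 'a='a and j=j] dq unfolding f_def by simp
      then show "?h j \<in> Sol \<tau>" unfolding Sol_def using absT_lt[OF T qj_ne] qj_ne by auto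
    qed
    have "inj ?h"
    proof (rule injI)
      fix i j assume "?h i = ?h j"
      hence "degree (qj (5^Suc i) :: 'a poly) = degree (qj (5^Suc j) :: 'a poly)" by simp
      hence "(5::nat)^Suc i = 5^Suc j" by (simp only: deg_qj zero_less_power zero_less_numeral)
      then show "i = j" by simp
    qed
    hence "infinite (range ?h)" using finite_imageD by blast
    then show False using fin sub finite_subset by blast
  qed

  have up: "finite (Sol \<tau>)" if tu: "\<tau> > 17/5" for \<tau>
  proof -
    have "Sol \<tau> \<subseteq> {P. degree P \<le> 15} \<times> {Q. degree Q \<le> 15}"
    proof
      fix x assume x: "x \<in> Sol \<tau>"
      obtain P Q :: "'a poly" where xPQ: "x = (P, Q)" by (cases x)
      have "(P, Q) \<in> Sol \<tau>" using x xPQ by simp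
      hence Qn: "Q \<noteq> 0" and c0: "absT T (f - poly_T P / poly_T Q) < absT T (poly_T Q) powr (- \<tau>)"
        unfolding Sol_def by auto
      define n where "n = degree Q"
      define S where "S = poly_T P / poly_T Q"
      have c: "f - S = 0 \<or> real_of_int (fls_subdegree (f - S)) > \<tau> * real n"
        using c0 absT_lt[OF T Qn] unfolding S_def n_def by simp
      have pQ: "poly_T Q \<noteq> 0" using Qn pT_eq0 by blast
      have vQ: "fls_subdegree (poly_T Q) = - int n" using pT_subdeg[OF Qn] n_def by simp
      have tn: "\<tau> * real n \<ge> 0" using tu by simp
      have nb: "n \<le> 15"
      proof -
        obtain j where j1: "n < 12*5^j" and j2: "12*5^Suc j \<le> 25*n + 60" using exj by blast
        define d where "d = (5::nat)^Suc j"
        define p where "p = (pj d :: 'a poly)"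
        define q where "q = (qj d :: 'a poly)"
        define R where "R = poly_T p / poly_T q"
        have qn: "q \<noteq> 0" unfolding q_def d_def by (rule qj_ne)
        have pq: "poly_T q \<noteq> 0" using qn pT_eq0 by blast
        have dq: "degree q = d" unfolding q_def d_def by (simp add: deg_qj)
        have fR: "f - R \<noteq> 0" "fls_subdegree (f - R) = int (17 * 5^j)"
          using err[where 'a='a and j=j] unfolding f_def R_def p_def q_def d_def by auto
        show ?thesis
        proof (cases "S = R")
          case True
          have "poly_T P * poly_T q = poly_T p * poly_T Q"
            using True pQ pq unfolding S_def R_def by (simp add: frac_eq_eq)
          hence "poly_T (P * q) = poly_T (p * Q)" by (simp add: pT_mult)
          hence "P * q = p * Q" by (rule pT_inj)
          hence "5^Suc j \<le> degree Q"
            using coprime_deg[OF card pj1[OF card, of j] _ Qn] unfolding p_def q_def qj_def d_def by blast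
          hence dn: "real d \<le> real n" unfolding d_def n_def by (simp only: of_nat_le_iff)
          have fSR: "f - S = f - R" using True by simp
          have fS0: "f - S \<noteq> 0" using fSR fR(1) by simp
          have v17: "fls_subdegree (f - S) = int (17*5^j)" using fSR fR(2) by simp
          have "real_of_int (fls_subdegree (f - S)) > \<tau> * real n" using c fS0 by blast
          hence lt1: "\<tau> * real n < real (17 * 5^j)" unfolding v17 by simp
          have "17/5 * real d < \<tau> * real d"
            by (rule mult_strict_right_mono[OF tu]) (simp add: d_def)
          also have "\<tau> * real d \<le> \<tau> * real n"
            by (rule mult_left_mono[OF dn]) (use tu in linarith)
          also note lt1
          finally have "17/5 * real d < real (17 * 5^j)" .
          moreover have "17/5 * real d = real (17 * 5^j)" unfolding d_def by simp
          ultimately show ?thesis by simp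
        next
          case False
          define N where "N = P * q - p * Q"
          have DN: "S - R = poly_T N / poly_T (Q * q)"
            unfolding S_def R_def N_def using pQ pq by (simp add: pT_diff pT_mult divide_simps)
          have Nn: "N \<noteq> 0" using False DN by auto
          have Qq: "Q * q \<noteq> 0" using Qn qn by simp
          have pQq: "poly_T (Q * q) \<noteq> 0" using Qq pT_eq0 by blast
          have eqN: "(S - R) * poly_T (Q * q) = poly_T N" unfolding DN using pQq by simp
          have SRn: "S - R \<noteq> 0" using False by simp
          have "fls_subdegree ((S - R) * poly_T (Q * q)) = fls_subdegree (S - R) + fls_subdegree (poly_T (Q*q))"
            by (rule fls_subdegree_mult[OF SRn pQq])
          hence "fls_subdegree (S - R) + fls_subdegree (poly_T (Q*q)) = - int (degree N)"
            unfolding eqN pT_subdeg[OF Nn] by simp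
          moreover have "fls_subdegree (poly_T (Q*q)) = - int (n + d)"
            using pT_subdeg[OF Qq] Qn qn dq n_def by (simp add: degree_mult_eq)
          ultimately have vD: "fls_subdegree (S - R) \<le> int (n + d)" by linarith
          have SR: "S - R = (f - R) - (f - S)" by simp
          have fS: "f - S \<noteq> 0"
          proof
            assume "f - S = 0"
            hence "S = f" by simp
            hence "S - R = f - R" by simp
            hence "fls_subdegree (S - R) = int (17*5^j)" using fR by simp
            moreover have "n + d < 17*5^j" using j1 unfolding d_def by simp
            ultimately show False using vD by linarith
          qed
          have vS: "fls_subdegree (f - S) \<le> int (n + d)"
          proof (rule ccontr)
            assume "\<not> ?thesis"
            moreover have "n + d < 17*5^j" using j1 unfolding d_def by simp
            hence "int (n + d) < int (17*5^j)" by (simp only: of_nat_less_iff)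
            moreover have "fls_subdegree (S - R) \<ge> min (fls_subdegree (f - R)) (fls_subdegree (f - S))"
              unfolding SR by (rule fls_subdegree_minus) (metis SR SRn)
            ultimately show False using vD fR by linarith
          qed
          have g1: "real_of_int (fls_subdegree (f - S)) > \<tau> * real n" using c fS by blast
          have "real_of_int (fls_subdegree (f - S)) \<le> real_of_int (int (n + d))"
            using vS by (simp only: of_int_le_iff)
          hence g2: "real_of_int (fls_subdegree (f - S)) \<le> real n + real d" by simp
          have g3: "17/5 * real n \<le> \<tau> * real n"
            by (rule mult_right_mono) (use tu in linarith, simp)
          have "12 * d \<le> 25 * n + 60" using j2 unfolding d_def by simp
          hence "real (12 * d) \<le> real (25 * n + 60)" by (simp only: of_nat_le_iff)
          hence g4: "12 * real d \<le> 25 * real n + 60" by simp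
          from g1 g2 g3 g4 have "real n < 16" by linarith
          then show ?thesis by linarith
        qed
      qed
      have "degree P \<le> n"
      proof (cases "P = 0")
        case True then show ?thesis by simp
      next
        case False
        have pP: "poly_T P \<noteq> 0" using False pT_eq0 by blast
        have Sn: "S \<noteq> 0" unfolding S_def using pP pQ by simp
        have vS: "fls_subdegree S \<ge> 0"
        proof (cases "f - S = 0")
          case True then have "S = f" by simp
          then show ?thesis using vf by simp
        next
          case False
          hence "real_of_int (fls_subdegree (f - S)) > \<tau> * real n" using c by auto
          hence "fls_subdegree (f - S) \<ge> 0" using tn by linarith
          moreover have "fls_subdegree (f - (f - S)) \<ge> min (fls_subdegree f) (fls_subdegree (f - S))"
            using Sn by (intro fls_subdegree_minus) simp
          moreover have "f - (f - S) = S" by simp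
          ultimately show ?thesis using vf by simp
        qed
        have "S * poly_T Q = poly_T P" unfolding S_def using pQ by simp
        hence "fls_subdegree S + fls_subdegree (poly_T Q) = fls_subdegree (poly_T P)"
          using Sn pQ by (metis fls_subdegree_mult)
        hence "fls_subdegree S - int n = - int (degree P)" using vQ pT_subdeg[OF False] by simp
        then show ?thesis using vS by linarith
      qed
      then show "x \<in> {P. degree P \<le> 15} \<times> {Q. degree Q \<le> 15}" using nb n_def xPQ by simp
    qed
    moreover have "finite ({P::'a poly. degree P \<le> 15} \<times> {Q::'a poly. degree Q \<le> 15})"
      using finite_polys[OF finU] by blast
    ultimately show ?thesis using finite_subset by blast
  qed

  let ?M = "{ereal \<tau> | \<tau>. infinite (Sol \<tau>)}"
  have "Sup ?M = ereal (17/5)"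
  proof (rule antisym)
    show "Sup ?M \<le> ereal (17/5)"
    proof (rule Sup_least)
      fix x assume "x \<in> ?M"
      then obtain \<tau> where x: "x = ereal \<tau>" and inf: "infinite (Sol \<tau>)" by blast
      have "\<not> \<tau> > 17/5" using inf up by blast
      then show "x \<le> ereal (17/5)" using x by simp
    qed
  next
    show "ereal (17/5) \<le> Sup ?M"
    proof (rule ccontr)
      assume "\<not> ?thesis"
      hence "Sup ?M < ereal (17/5)" by simp
      then obtain r where r1: "Sup ?M < ereal r" and r2: "ereal r < ereal (17/5)"
        using ereal_dense2 by blast
      have "ereal r \<in> ?M" using low[of r] r2 by auto
      hence "ereal r \<le> Sup ?M" by (rule Sup_upper)
      then show False using r1 by simp
    qed
  qed
  then show ?thesis using ie unfolding f_def by simp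
qed

end
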